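(* Let $P\in\mathcal{RP}$ and assume $x_P^+\notin X_P^-$, $x_P^-\notin X_P^+$, $y_P^+\notin Y_P^-$, $y_P^-\notin Y_P^+$. Suppose that for every choice of integers $n_x$ ($x\in X_P\setminus\{0\}$) and $m_y$ ($y\in Y_P\setminus\{0\}$), not all zero, with $n_{x_P^+}\cdot n_{x_P^-}\ge0$ and $m_{y_P^+}\cdot m_{y_P^-}\ge0$ (an index equal to $0$ being omitted), we have $$\sum_{x\in X_P\setminus\{0\}}n_x x-\sum_{y\in Y_P\setminus\{0\}}m_y y\neq0.$$ Then $P$ is not resonant.
   Context: $\mathcal{RP}$ is the family of bounded planar polygons (not necessarily connected or simply connected) whose boundary is a finite union of vertical and horizontal segments. For $P\in\mathcal{RP}$: $X_P^+$ is the set of non-negative first coordinates of vertical sides of $P$; $X_P^-$ is the set of numbers $-x$ where $x<0$ is the first coordinate of a vertical side; $Y_P^+$, $Y_P^-$ are defined analogously from second coordinates of horizontal sides; $X_P=X_P^+\cup X_P^-$, $Y_P=Y_P^+\cup Y_P^-$; $x_P^\pm=\max X_P^\pm$, $y_P^\pm=\max Y_P^\pm$ with the convention $\max\emptyset=0$. The billiard flow on $P$ in directions $\pm\pi/4,\pm3\pi/4$ moves points with unit speed along these diagonal directions and reflects elastically off the sides. $P$ is resonant if this billiard flow has an orbit segment joining two (not necessarily distinct) corners of $P$. *)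

theory Defs
  imports "HOL-Analysis.Analysis"
begin

text \<open>A rectilinear polygon (class RP) is a
 nonempty finite union of nondegenerate closed axis-parallel rectangles; these are exactly
 the bounded (regular closed) planar regions whose boundary is a finite union of
 horizontal and vertical segments.\<close>

definition RP :: "(real \<times> real) set \<Rightarrow> bool" where
  "RP P \<longleftrightarrow> (\<exists>R :: (real \<times> real \<times> real \<times> real) set.
      finite R \<and> R \<noteq> {} \<and> (\<forall>(a,b,c,d)\<in>R. a < b \<and> c < d) \<and>
      P = (\<Union>(a,b,c,d)\<in>R. {a..b} \<times> {c..d}))"

definition vert_coords :: "(real \<times> real) set \<Rightarrow> real set" where
  "vert_coords P = {x. \<exists>c d. c < d \<and> {x} \<times> {c..d} \<subseteq> frontier P}"

definition horiz_coords :: "(real \<times> real) set \<Rightarrow> real set" where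
  "horiz_coords P = {y. \<exists>a b. a < b \<and> {a..b} \<times> {y} \<subseteq> frontier P}"

definition XP_plus :: "(real \<times> real) set \<Rightarrow> real set" where
  "XP_plus P = {x \<in> vert_coords P. x \<ge> 0}"
definition XP_minus :: "(real \<times> real) set \<Rightarrow> real set" where
  "XP_minus P = {- x | x. x \<in> vert_coords P \<and> x < 0}"
definition YP_plus :: "(real \<times> real) set \<Rightarrow> real set" where
  "YP_plus P = {y \<in> horiz_coords P. y \<ge> 0}"
definition YP_minus :: "(real \<times> real) set \<Rightarrow> real set" where
  "YP_minus P = {- y | y. y \<in> horiz_coords P \<and> y < 0}"

definition XP :: "(real \<times> real) set \<Rightarrow> real set" where
  "XP P = XP_plus P \<union> XP_minus P"
definition YP :: "(real \<times> real) set \<Rightarrow> real set" where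
  "YP P = YP_plus P \<union> YP_minus P"

definition max0 :: "real set \<Rightarrow> real" where
  "max0 S = (if S = {} then 0 else Max S)"

definition xP_plus where "xP_plus P = max0 (XP_plus P)"
definition xP_minus where "xP_minus P = max0 (XP_minus P)"
definition yP_plus where "yP_plus P = max0 (YP_plus P)"
definition yP_minus where "yP_minus P = max0 (YP_minus P)"

definition corner :: "(real \<times> real) set \<Rightarrow> real \<times> real \<Rightarrow> bool" where
  "corner P p \<longleftrightarrow> p \<in> frontier P \<and>
     (\<exists>e>0. \<exists>sx\<in>{-1,1}. \<exists>sy\<in>{-1,1}.
        closed_segment p (p + (sx * e, 0)) \<subseteq> frontier P \<and>
        closed_segment p (p + (0, sy * e)) \<subseteq> frontier P)"

definition on_vside :: "(real \<times> real) set \<Rightarrow> real \<times> real \<Rightarrow> bool" where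
  "on_vside P p \<longleftrightarrow> (\<exists>e>0. closed_segment (p - (0, e)) (p + (0, e)) \<subseteq> frontier P)"
definition on_hside :: "(real \<times> real) set \<Rightarrow> real \<times> real \<Rightarrow> bool" where
  "on_hside P p \<longleftrightarrow> (\<exists>e>0. closed_segment (p - (e, 0)) (p + (e, 0)) \<subseteq> frontier P)"

text \<open>Resonance: an orbit segment of the billiard flow in the diagonal directions
 (direction vectors (a,b) with a,b = +-1, i.e. angles +-pi/4, +-3pi/4) joining two corners.\<close>
definition resonant :: "(real \<times> real) set \<Rightarrow> bool" where
  "resonant P \<longleftrightarrow> (\<exists>k::nat. \<exists>q d :: nat \<Rightarrow> real \<times> real. k \<ge> 1 \<and>
     corner P (q 0) \<and> corner P (q k) \<and>
     (\<forall>i<k. fst (d i) \<in> {-1, 1} \<and> snd (d i) \<in> {-1, 1} \<and>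
            (\<exists>t>0. q (Suc i) = q i + t *\<^sub>R d i) \<and>
            closed_segment (q i) (q (Suc i)) \<subseteq> P \<and>
            open_segment (q i) (q (Suc i)) \<subseteq> interior P) \<and>
     (\<forall>i. 0 < i \<and> i < k \<longrightarrow>
            q i \<in> frontier P \<and> \<not> corner P (q i) \<and>
            (on_vside P (q i) \<longrightarrow> d i = (- fst (d (i - 1)), snd (d (i - 1)))) \<and>
            (on_hside P (q i) \<longrightarrow> d i = (fst (d (i - 1)), - snd (d (i - 1))))))"

end

theory Submission
  imports Defs
begin


definition sd :: "bool \<Rightarrow> real \<Rightarrow> bool" where
  "sd u z = (if u then 0 \<le> z else z \<le> 0)"

definition locrep :: "(real \<times> real) set \<Rightarrow> real \<times> real \<Rightarrow> real \<Rightarrow> (bool \<Rightarrow> bool \<Rightarrow> bool) \<Rightarrow> bool" where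
  "locrep P q r Q \<longleftrightarrow> r > 0 \<and> (\<forall>p. \<bar>fst p - fst q\<bar> < r \<and> \<bar>snd p - snd q\<bar> < r \<longrightarrow>
      (p \<in> P \<longleftrightarrow> (\<exists>u v. Q u v \<and> sd u (fst p - fst q) \<and> sd v (snd p - snd q))))"

lemma locrep_Un:
  assumes "locrep A q r1 Q1" "locrep B q r2 Q2"
  shows "locrep (A \<union> B) q (min r1 r2) (\<lambda>u v. Q1 u v \<or> Q2 u v)"
  using assms unfolding locrep_def by auto

lemma one_dim:
  fixes a b x0 z r :: real
  assumes "a < b" "a \<le> x0" "x0 \<le> b" "\<bar>z - x0\<bar> < r"
    "r \<le> (if a < x0 then x0 - a else 1)" "r \<le> (if x0 < b then b - x0 else 1)"
  shows "(a \<le> z \<and> z \<le> b) \<longleftrightarrow> (\<exists>u. (if u then x0 < b else a < x0) \<and> sd u (z - x0))"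
  using assms unfolding sd_def ex_bool_eq by (auto split: if_splits)

lemma out_rect:
  fixes a b c d x0 y0 :: real
  assumes "\<not>(a \<le> x0 \<and> x0 \<le> b \<and> c \<le> y0 \<and> y0 \<le> d)"
  shows "\<exists>r>0. \<forall>p1 p2. \<bar>p1-x0\<bar><r \<and> \<bar>p2-y0\<bar><r \<longrightarrow> \<not>(a \<le> p1 \<and> p1 \<le> b \<and> c \<le> p2 \<and> p2 \<le> d)"
proof -
  consider "x0 < a" | "b < x0" | "y0 < c" | "d < y0" using assms by linarith
  then show ?thesis
  proof cases
    case 1 then show ?thesis by (intro exI[of _ "a - x0"]) auto
  next
    case 2 then show ?thesis by (intro exI[of _ "x0 - b"]) auto
  next
    case 3 then show ?thesis by (intro exI[of _ "c - y0"]) auto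
  next
    case 4 then show ?thesis by (intro exI[of _ "y0 - d"]) auto
  qed
qed

lemma locrep_rect:
  fixes a b c d :: real
  assumes "a < b" "c < d"
  shows "\<exists>r Q. locrep ({a..b} \<times> {c..d}) q r Q"
proof (cases "q \<in> {a..b} \<times> {c..d}")
  case True
  obtain x0 y0 where q: "q = (x0, y0)" by fastforce
  define r where "r = min (min (if a < x0 then x0 - a else 1) (if x0 < b then b - x0 else 1))
                          (min (if c < y0 then y0 - c else 1) (if y0 < d then d - y0 else 1))"
  have x: "a \<le> x0" "x0 \<le> b" and y: "c \<le> y0" "y0 \<le> d" using True q by auto
  have rpos: "r > 0" unfolding r_def by auto
  have r1: "r \<le> (if a < x0 then x0 - a else 1)" "r \<le> (if x0 < b then b - x0 else 1)"
    "r \<le> (if c < y0 then y0 - c else 1)" "r \<le> (if y0 < d then d - y0 else 1)"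
    unfolding r_def by (meson min.cobounded1 min.cobounded2 order_trans)+
  show ?thesis
  proof (intro exI)
    show "locrep ({a..b} \<times> {c..d}) q r (\<lambda>u v. (if u then x0 < b else a < x0) \<and> (if v then y0 < d else c < y0))"
      unfolding locrep_def
    proof (intro conjI rpos allI impI)
      fix p :: "real \<times> real"
      assume p: "\<bar>fst p - fst q\<bar> < r \<and> \<bar>snd p - snd q\<bar> < r"
      have ex: "(a \<le> fst p \<and> fst p \<le> b) \<longleftrightarrow> (\<exists>u. (if u then x0 < b else a < x0) \<and> sd u (fst p - x0))"
        using one_dim[OF assms(1) x _ r1(1,2)] p q by auto
      have ey: "(c \<le> snd p \<and> snd p \<le> d) \<longleftrightarrow> (\<exists>u. (if u then y0 < d else c < y0) \<and> sd u (snd p - y0))"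
        using one_dim[OF assms(2) y _ r1(3,4)] p q by auto
      show "(p \<in> {a..b} \<times> {c..d}) = (\<exists>u v. ((if u then x0 < b else a < x0) \<and> (if v then y0 < d else c < y0)) \<and>
           sd u (fst p - fst q) \<and> sd v (snd p - snd q))"
        using ex ey q by (cases p) auto
    qed
  qed
next
  case False
  obtain x0 y0 where q: "q = (x0, y0)" by fastforce
  obtain r where r: "r > 0" "\<forall>p1 p2. \<bar>p1-x0\<bar><r \<and> \<bar>p2-y0\<bar><r \<longrightarrow> \<not>(a \<le> p1 \<and> p1 \<le> b \<and> c \<le> p2 \<and> p2 \<le> d)"
    using out_rect[of a x0 b c y0 d] False q by auto
  have "locrep ({a..b} \<times> {c..d}) q r (\<lambda>u v. False)"
    unfolding locrep_def using r q by (auto simp: mem_Times_iff)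
  then show ?thesis by blast
qed

lemma RP_mem:
  "p \<in> (\<Union>(a,b,c,d)\<in>R. {a..b} \<times> {c..d}) \<longleftrightarrow>
   (\<exists>a b c d. (a,b,c,d)\<in>R \<and> a \<le> fst p \<and> fst p \<le> b \<and> c \<le> snd p \<and> snd p \<le> d)"
proof
  assume "p \<in> (\<Union>(a,b,c,d)\<in>R. {a..b} \<times> {c..d})"
  then obtain a b c d where "(a,b,c,d)\<in>R" "p \<in> {a..b} \<times> {c..d}" by auto
  then show "\<exists>a b c d. (a,b,c,d)\<in>R \<and> a \<le> fst p \<and> fst p \<le> b \<and> c \<le> snd p \<and> snd p \<le> d"
    by (auto simp: mem_Times_iff)
next
  assume "\<exists>a b c d. (a,b,c,d)\<in>R \<and> a \<le> fst p \<and> fst p \<le> b \<and> c \<le> snd p \<and> snd p \<le> d"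
  then obtain a b c d where h: "(a,b,c,d)\<in>R" "a \<le> fst p" "fst p \<le> b" "c \<le> snd p" "snd p \<le> d" by blast
  show "p \<in> (\<Union>(a,b,c,d)\<in>R. {a..b} \<times> {c..d})"
    by (rule UN_I[OF h(1)]) (use h in \<open>auto simp: mem_Times_iff\<close>)
qed

definition rset :: "(real \<times> real \<times> real \<times> real) set \<Rightarrow> (real \<times> real) set" where
  "rset R = {p. \<exists>a b c d. (a,b,c,d)\<in>R \<and> a \<le> fst p \<and> fst p \<le> b \<and> c \<le> snd p \<and> snd p \<le> d}"

lemma RP_D:
  assumes "RP P"
  shows "\<exists>R. finite R \<and> R \<noteq> {} \<and> (\<forall>a b c d. (a,b,c,d)\<in>R \<longrightarrow> a<b \<and> c<d) \<and> P = rset R"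
proof -
  obtain R where R: "finite R" "R \<noteq> {}" "\<forall>(a,b,c,d)\<in>R. a < b \<and> c < d"
    "P = (\<Union>(a,b,c,d)\<in>R. {a..b} \<times> {c..d})" using assms unfolding RP_def by blast
  have "P = rset R" unfolding rset_def R(4) by (simp only: set_eq_iff mem_Collect_eq RP_mem) simp
  moreover have "\<forall>a b c d. (a,b,c,d)\<in>R \<longrightarrow> a<b \<and> c<d"
  proof (intro allI impI)
    fix a b c d assume "(a,b,c,d)\<in>R" then show "a<b \<and> c<d" using R(3) by fastforce
  qed
  ultimately show ?thesis using R by blast
qed

lemma RP_closed: "RP P \<Longrightarrow> closed P"
  unfolding RP_def
  apply clarify
  apply (rule closed_UN)
   apply simp
  apply (auto intro!: closed_Times)
  done

lemma locrep_rset: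
  assumes "finite R" "\<forall>a b c d. (a,b,c,d)\<in>R \<longrightarrow> a<b \<and> c<d"
  shows "\<exists>r Q. locrep (rset R) q r Q"
  using assms
proof (induction R rule: finite_induct)
  case empty
  have "locrep (rset {}) q 1 (\<lambda>u v. False)" unfolding locrep_def rset_def by auto
  then show ?case by blast
next
  case (insert x F)
  obtain a b c d where x: "x = (a,b,c,d)" by (cases x) auto
  have "a < b" "c < d" using insert.prems x by auto
  then obtain r1 Q1 where 1: "locrep ({a..b} \<times> {c..d}) q r1 Q1" using locrep_rect by blast
  obtain r2 Q2 where 2: "locrep (rset F) q r2 Q2" using insert by auto
  have "rset (insert x F) = {a..b} \<times> {c..d} \<union> rset F" unfolding rset_def x by (auto simp: mem_Times_iff) (metis order.refl)
  then show ?case using locrep_Un[OF 1 2] by metis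
qed

lemma locrep_RP: "RP P \<Longrightarrow> \<exists>r Q. locrep P q r Q"
  using RP_D locrep_rset by metis



lemma locrep_q_frontier:
  assumes L: "locrep P q r Q" and cl: "closed P" and fr: "q \<in> frontier P"
  shows "(\<exists>u v. Q u v) \<and> \<not>(\<forall>u v. Q u v)"
proof
  have "q \<in> P" using frontier_subset_closed[OF cl] fr by blast
  then show "\<exists>u v. Q u v" using L unfolding locrep_def sd_def by auto
next
  show "\<not>(\<forall>u v. Q u v)"
  proof
    assume all: "\<forall>u v. Q u v"
    have r: "r > 0" using L unfolding locrep_def by auto
    have "ball q r \<subseteq> P"
    proof
      fix p assume "p \<in> ball q r"
      then have d: "dist p q < r" by (simp add: dist_commute)
      have "\<bar>fst p - fst q\<bar> < r" using dist_fst_le[of p q] d by (simp add: dist_real_def)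
      moreover have "\<bar>snd p - snd q\<bar> < r" using dist_snd_le[of p q] d by (simp add: dist_real_def)
      ultimately have "p \<in> P \<longleftrightarrow> (\<exists>u v. Q u v \<and> sd u (fst p - fst q) \<and> sd v (snd p - snd q))"
        using L unfolding locrep_def by blast
      moreover have "sd (0 \<le> fst p - fst q) (fst p - fst q)" "sd (0 \<le> snd p - snd q) (snd p - snd q)"
        unfolding sd_def by auto
      ultimately show "p \<in> P" using all by blast
    qed
    then have "q \<in> interior P" using r mem_interior by blast
    then show False using fr unfolding frontier_def by blast
  qed
qed

lemma hray:
  assumes L: "locrep P q r Q" and x: "Q u True \<noteq> Q u False" and s: "0 < s" "s < r"
  shows "(fst q + (if u then s else -s), snd q) \<in> frontier P"
proof -
  define p where "p = (fst q + (if u then s else -s), snd q)"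
  have r: "r > 0" using L unfolding locrep_def by auto
  have mem: "\<And>p'. \<bar>fst p' - fst q\<bar> < r \<Longrightarrow> \<bar>snd p' - snd q\<bar> < r \<Longrightarrow>
      (p' \<in> P \<longleftrightarrow> (\<exists>u v. Q u v \<and> sd u (fst p' - fst q) \<and> sd v (snd p' - snd q)))"
    using L unfolding locrep_def by blast
  have "p \<in> P"
  proof -
    obtain v where "Q u v" using x by (cases "Q u True") auto
    moreover have "sd u (fst p - fst q)" "sd v (snd p - snd q)" using s unfolding p_def sd_def by auto
    moreover have "\<bar>fst p - fst q\<bar> < r" "\<bar>snd p - snd q\<bar> < r" using s r unfolding p_def by auto
    ultimately show ?thesis using mem by blast
  qed
  moreover have "p \<notin> interior P"
  proof
    assume "p \<in> interior P"
    then obtain e where e: "e > 0" "ball p e \<subseteq> P" using mem_interior by blast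
    obtain v' where v': "\<not> Q u v'" using x by (cases "Q u True") auto
    define \<epsilon> where "\<epsilon> = min (e/2) (r/2)"
    have ep: "\<epsilon> > 0" "\<epsilon> < e" "\<epsilon> < r" using e r unfolding \<epsilon>_def by auto
    define p' where "p' = (fst p, snd q + (if v' then \<epsilon> else -\<epsilon>))"
    have "dist p p' = \<epsilon>" unfolding p'_def p_def using ep by (simp add: dist_Pair_Pair dist_real_def)
    then have "p' \<in> P" using e ep by auto
    moreover have "\<bar>fst p' - fst q\<bar> < r" "\<bar>snd p' - snd q\<bar> < r" using s ep unfolding p'_def p_def by auto
    ultimately obtain u'' v'' where h: "Q u'' v''" "sd u'' (fst p' - fst q)" "sd v'' (snd p' - snd q)"
      using mem by blast
    have "u'' = u" using h(2) s unfolding sd_def p'_def p_def by (cases u; cases u'') auto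
    moreover have "v'' = v'" using h(3) ep unfolding sd_def p'_def by (cases v'; cases v'') auto
    ultimately show False using h(1) v' by simp
  qed
  ultimately show ?thesis unfolding p_def[symmetric] frontier_def using closure_subset by blast
qed

lemma vray:
  assumes L: "locrep P q r Q" and x: "Q True v \<noteq> Q False v" and s: "0 < s" "s < r"
  shows "(fst q, snd q + (if v then s else -s)) \<in> frontier P"
proof -
  define p where "p = (fst q, snd q + (if v then s else -s))"
  have r: "r > 0" using L unfolding locrep_def by auto
  have mem: "\<And>p'. \<bar>fst p' - fst q\<bar> < r \<Longrightarrow> \<bar>snd p' - snd q\<bar> < r \<Longrightarrow>
      (p' \<in> P \<longleftrightarrow> (\<exists>u v. Q u v \<and> sd u (fst p' - fst q) \<and> sd v (snd p' - snd q)))"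
    using L unfolding locrep_def by blast
  have "p \<in> P"
  proof -
    obtain u where "Q u v" using x by (cases "Q True v") auto
    moreover have "sd u (fst p - fst q)" "sd v (snd p - snd q)" using s unfolding p_def sd_def by auto
    moreover have "\<bar>fst p - fst q\<bar> < r" "\<bar>snd p - snd q\<bar> < r" using s r unfolding p_def by auto
    ultimately show ?thesis using mem by blast
  qed
  moreover have "p \<notin> interior P"
  proof
    assume "p \<in> interior P"
    then obtain e where e: "e > 0" "ball p e \<subseteq> P" using mem_interior by blast
    obtain u' where u': "\<not> Q u' v" using x by (cases "Q True v") auto
    define \<epsilon> where "\<epsilon> = min (e/2) (r/2)"
    have ep: "\<epsilon> > 0" "\<epsilon> < e" "\<epsilon> < r" using e r unfolding \<epsilon>_def by auto
    define p' where "p' = (fst q + (if u' then \<epsilon> else -\<epsilon>), snd p)"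
    have "dist p p' = \<epsilon>" unfolding p'_def p_def using ep by (simp add: dist_Pair_Pair dist_real_def)
    then have "p' \<in> P" using e ep by auto
    moreover have "\<bar>fst p' - fst q\<bar> < r" "\<bar>snd p' - snd q\<bar> < r" using s ep unfolding p'_def p_def by auto
    ultimately obtain u'' v'' where h: "Q u'' v''" "sd u'' (fst p' - fst q)" "sd v'' (snd p' - snd q)"
      using mem by blast
    have "v'' = v" using h(3) s unfolding sd_def p'_def p_def by (cases v; cases v'') auto
    moreover have "u'' = u'" using h(2) ep unfolding sd_def p'_def by (cases u'; cases u'') auto
    ultimately show False using h(1) u' by simp
  qed
  ultimately show ?thesis unfolding p_def[symmetric] frontier_def using closure_subset by blast
qed



lemma hpt:
  assumes L: "locrep P q r Q" and fr: "q \<in> frontier P" and z: "\<bar>z - fst q\<bar> < r"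
    and x: "z \<noteq> fst q \<Longrightarrow> Q (fst q < z) True \<noteq> Q (fst q < z) False"
  shows "(z, snd q) \<in> frontier P"
proof (cases "z = fst q")
  case True then show ?thesis using fr by simp
next
  case False
  have "(fst q + (if fst q < z then \<bar>z - fst q\<bar> else -\<bar>z - fst q\<bar>), snd q) \<in> frontier P"
    by (rule hray[OF L x[OF False]]) (use False z in auto)
  moreover have "fst q + (if fst q < z then \<bar>z - fst q\<bar> else -\<bar>z - fst q\<bar>) = z" by auto
  ultimately show ?thesis by simp
qed

lemma vpt:
  assumes L: "locrep P q r Q" and fr: "q \<in> frontier P" and z: "\<bar>z - snd q\<bar> < r"
    and x: "z \<noteq> snd q \<Longrightarrow> Q True (snd q < z) \<noteq> Q False (snd q < z)"
  shows "(fst q, z) \<in> frontier P"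
proof (cases "z = snd q")
  case True then show ?thesis using fr by simp
next
  case False
  have "(fst q, snd q + (if snd q < z then \<bar>z - snd q\<bar> else -\<bar>z - snd q\<bar>)) \<in> frontier P"
    by (rule vray[OF L x[OF False]]) (use False z in auto)
  moreover have "snd q + (if snd q < z then \<bar>z - snd q\<bar> else -\<bar>z - snd q\<bar>) = z" by auto
  ultimately show ?thesis by simp
qed

lemma trich:
  assumes RP: "RP P" and fr: "q \<in> frontier P" and nc: "\<not> corner P q"
  shows "on_vside P q \<or> on_hside P q"
proof -
  obtain r Q where L: "locrep P q r Q" using locrep_RP[OF RP] by blast
  have r: "r > 0" using L unfolding locrep_def by auto
  have QQ: "(\<exists>u v. Q u v) \<and> \<not>(\<forall>u v. Q u v)" using locrep_q_frontier[OF L RP_closed[OF RP] fr] .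
  define e where "e = r/2"
  have e: "0 < e" "e < r" using r unfolding e_def by auto
  have hs: "closed_segment q (q + ((if u then 1 else -1)*e, 0)) \<subseteq> frontier P"
    if "Q u True \<noteq> Q u False" for u
  proof
    fix p assume "p \<in> closed_segment q (q + ((if u then 1 else -1)*e, 0))"
    then have p: "p \<in> closed_segment (fst q) (fst q + (if u then 1 else -1)*e) \<times> {snd q}"
      by (subst (asm) closed_segment_same_snd) auto
    then obtain z where pz: "p = (z, snd q)" "z \<in> closed_segment (fst q) (fst q + (if u then 1 else -1)*e)" by auto
    have "\<bar>z - fst q\<bar> < r" "z \<noteq> fst q \<Longrightarrow> (fst q < z) = u"
      using pz(2) e by (auto simp: closed_segment_eq_real_ivl split: if_splits)
    then show "p \<in> frontier P" using hpt[OF L fr, of z] that pz(1) by auto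
  qed
  have vs: "closed_segment q (q + (0, (if v then 1 else -1)*e)) \<subseteq> frontier P"
    if "Q True v \<noteq> Q False v" for v
  proof
    fix p assume "p \<in> closed_segment q (q + (0, (if v then 1 else -1)*e))"
    then have p: "p \<in> {fst q} \<times> closed_segment (snd q) (snd q + (if v then 1 else -1)*e)"
      by (subst (asm) closed_segment_same_fst) auto
    then obtain z where pz: "p = (fst q, z)" "z \<in> closed_segment (snd q) (snd q + (if v then 1 else -1)*e)" by auto
    have "\<bar>z - snd q\<bar> < r" "z \<noteq> snd q \<Longrightarrow> (snd q < z) = v"
      using pz(2) e by (auto simp: closed_segment_eq_real_ivl split: if_splits)
    then show "p \<in> frontier P" using vpt[OF L fr, of z] that pz(1) by auto
  qed
  have hs2: "closed_segment (q - (e,0)) (q + (e, 0)) \<subseteq> frontier P"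
    if "Q True True \<noteq> Q True False" "Q False True \<noteq> Q False False"
  proof
    fix p assume "p \<in> closed_segment (q - (e,0)) (q + (e, 0))"
    then have p: "p \<in> closed_segment (fst q - e) (fst q + e) \<times> {snd q}"
      by (subst (asm) closed_segment_same_snd) auto
    then obtain z where pz: "p = (z, snd q)" "z \<in> closed_segment (fst q - e) (fst q + e)" by auto
    have "\<bar>z - fst q\<bar> < r"
      using pz(2) e by (auto simp: closed_segment_eq_real_ivl split: if_splits)
    moreover have "Q (fst q < z) True \<noteq> Q (fst q < z) False" using that by (cases "fst q < z") auto
    ultimately show "p \<in> frontier P" using hpt[OF L fr, of z] pz(1) by auto
  qed
  have vs2: "closed_segment (q - (0,e)) (q + (0,e)) \<subseteq> frontier P"
    if "Q True True \<noteq> Q False True" "Q True False \<noteq> Q False False"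
  proof
    fix p assume "p \<in> closed_segment (q - (0,e)) (q + (0,e))"
    then have p: "p \<in> {fst q} \<times> closed_segment (snd q - e) (snd q + e)"
      by (subst (asm) closed_segment_same_fst) auto
    then obtain z where pz: "p = (fst q, z)" "z \<in> closed_segment (snd q - e) (snd q + e)" by auto
    have "\<bar>z - snd q\<bar> < r"
      using pz(2) e by (auto simp: closed_segment_eq_real_ivl split: if_splits)
    moreover have "Q True (snd q < z) \<noteq> Q False (snd q < z)" using that by (cases "snd q < z") auto
    ultimately show "p \<in> frontier P" using vpt[OF L fr, of z] pz(1) by auto
  qed
  show ?thesis
  proof (cases "(\<exists>u. Q u True \<noteq> Q u False) \<and> (\<exists>v. Q True v \<noteq> Q False v)")
    case True
    then obtain u v where uv: "Q u True \<noteq> Q u False" "Q True v \<noteq> Q False v" by blast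
    have "corner P q" unfolding corner_def
      apply (rule conjI[OF fr])
      apply (rule exI[of _ e], rule conjI[OF e(1)])
      apply (rule bexI[of _ "if u then 1 else -1"])
       apply (rule bexI[of _ "if v then 1 else -1"])
      using hs[OF uv(1)] vs[OF uv(2)] by auto
    then show ?thesis using nc by blast
  next
    case False
    show ?thesis
    proof (cases "Q True True \<noteq> Q True False \<and> Q False True \<noteq> Q False False")
      case True
      then have "on_hside P q" unfolding on_hside_def using hs2 e by blast
      then show ?thesis by blast
    next
      case F2: False
      have "Q True True \<noteq> Q False True \<and> Q True False \<noteq> Q False False"
        using False F2 QQ unfolding ex_bool_eq all_bool_eq by blast
      then have "on_vside P q" unfolding on_vside_def using vs2 e by blast
      then show ?thesis by blast
    qed
  qed
qed

lemma vseg_coord: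
  assumes "closed_segment (x, y1) (x, y2) \<subseteq> frontier P" "y1 \<noteq> y2"
  shows "x \<in> vert_coords P"
proof -
  have "{x} \<times> {min y1 y2..max y1 y2} \<subseteq> frontier P"
    using assms(1) by (subst (asm) closed_segment_same_fst) (auto simp: closed_segment_eq_real_ivl min_def max_def split: if_splits)
  then show ?thesis unfolding vert_coords_def using assms(2)
    by (intro CollectI exI[of _ "min y1 y2"] exI[of _ "max y1 y2"]) (auto simp: min_def max_def)
qed

lemma hseg_coord:
  assumes "closed_segment (x1, y) (x2, y) \<subseteq> frontier P" "x1 \<noteq> x2"
  shows "y \<in> horiz_coords P"
proof -
  have "{min x1 x2..max x1 x2} \<times> {y} \<subseteq> frontier P"
    using assms(1) by (subst (asm) closed_segment_same_snd) (auto simp: closed_segment_eq_real_ivl min_def max_def split: if_splits)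
  then show ?thesis unfolding horiz_coords_def using assms(2)
    by (intro CollectI exI[of _ "min x1 x2"] exI[of _ "max x1 x2"]) (auto simp: min_def max_def)
qed

lemma corner_coords:
  assumes "corner P p"
  shows "fst p \<in> vert_coords P" "snd p \<in> horiz_coords P"
proof -
  obtain e sx sy where e: "e > 0" "sx \<in> {-1,1}" "sy \<in> {-1,1}"
    "closed_segment p (p + (sx * e, 0)) \<subseteq> frontier P" "closed_segment p (p + (0, sy * e)) \<subseteq> frontier P"
    using assms unfolding corner_def by blast
  have "closed_segment (fst p, snd p) (fst p, snd p + sy * e) \<subseteq> frontier P" using e(5) by (cases p) simp
  then show "fst p \<in> vert_coords P" by (rule vseg_coord) (use e in auto)
  have "closed_segment (fst p, snd p) (fst p + sx * e, snd p) \<subseteq> frontier P" using e(4) by (cases p) simp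
  then show "snd p \<in> horiz_coords P" by (rule hseg_coord) (use e in auto)
qed

lemma vside_coord: "on_vside P p \<Longrightarrow> fst p \<in> vert_coords P"
  unfolding on_vside_def
proof (elim exE conjE)
  fix e :: real assume e: "e > 0" "closed_segment (p - (0, e)) (p + (0, e)) \<subseteq> frontier P"
  then have "closed_segment (fst p, snd p - e) (fst p, snd p + e) \<subseteq> frontier P" using e by (cases p) simp
  then show ?thesis by (rule vseg_coord) (use e in auto)
qed

lemma hside_coord: "on_hside P p \<Longrightarrow> snd p \<in> horiz_coords P"
  unfolding on_hside_def
proof (elim exE conjE)
  fix e :: real assume e: "e > 0" "closed_segment (p - (e, 0)) (p + (e, 0)) \<subseteq> frontier P"
  then have "closed_segment (fst p - e, snd p) (fst p + e, snd p) \<subseteq> frontier P" using e by (cases p) simp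
  then show ?thesis by (rule hseg_coord) (use e in auto)
qed



lemma rset_mem: "p \<in> rset R \<longleftrightarrow> (\<exists>a b c d. (a,b,c,d)\<in>R \<and> a \<le> fst p \<and> fst p \<le> b \<and> c \<le> snd p \<and> snd p \<le> d)"
  unfolding rset_def by simp

lemma not_frontier_generic:
  assumes R: "finite R" "P = rset R" and cl: "closed P"
    and nx: "\<forall>a b c d. (a,b,c,d)\<in>R \<longrightarrow> fst p \<noteq> a \<and> fst p \<noteq> b \<and> snd p \<noteq> c \<and> snd p \<noteq> d"
  shows "p \<notin> frontier P"
proof
  assume fr: "p \<in> frontier P"
  show False
  proof (cases "p \<in> P")
    case True
    then obtain a b c d where h: "(a,b,c,d)\<in>R" "a \<le> fst p" "fst p \<le> b" "c \<le> snd p" "snd p \<le> d"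
      using R(2) rset_mem by blast
    have s: "a < fst p" "fst p < b" "c < snd p" "snd p < d" using h nx by force+
    have "{a<..<b} \<times> {c<..<d} \<subseteq> P"
    proof (rule subsetI)
      fix z assume "z \<in> {a<..<b} \<times> {c<..<d}"
      then have "a \<le> fst z \<and> fst z \<le> b \<and> c \<le> snd z \<and> snd z \<le> d" by (cases z) auto
      then show "z \<in> P" unfolding R(2) rset_mem using h(1) by blast
    qed
    moreover have "p \<in> {a<..<b} \<times> {c<..<d}" using s by (cases p) auto
    moreover have "open ({a<..<b} \<times> {c<..<d})" by (intro open_Times) auto
    ultimately have "p \<in> interior P" using interiorI by blast
    then show False using fr unfolding frontier_def by blast
  next
    case False
    then show False using fr frontier_subset_closed[OF cl] by blast
  qed
qed

lemma vert_finite: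
  assumes "RP P" shows "finite (vert_coords P)"
proof -
  obtain R where R: "finite R" "\<forall>a b c d. (a,b,c,d)\<in>R \<longrightarrow> a<b \<and> c<d" "P = rset R"
    using RP_D[OF assms] by blast
  define XE where "XE = (\<lambda>(a,b,c,d). a) ` R \<union> (\<lambda>(a,b,c,d). b) ` R"
  define YE where "YE = (\<lambda>(a,b,c,d). c) ` R \<union> (\<lambda>(a,b,c,d). d) ` R"
  have fin: "finite XE" "finite YE" unfolding XE_def YE_def using R(1) by auto
  have "vert_coords P \<subseteq> XE"
  proof
    fix x assume "x \<in> vert_coords P"
    then obtain c d where cd: "c < d" "{x} \<times> {c..d} \<subseteq> frontier P" unfolding vert_coords_def by blast
    show "x \<in> XE"
    proof (rule ccontr)
      assume nx: "x \<notin> XE"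
      have "\<not> {c..d} \<subseteq> YE" using cd(1) fin(2) infinite_Icc finite_subset by blast
      then obtain y where y: "y \<in> {c..d}" "y \<notin> YE" by blast
      have "(x,y) \<in> frontier P" using cd y by auto
      moreover have "(x,y) \<notin> frontier P"
      proof (rule not_frontier_generic[OF R(1) R(3) RP_closed[OF assms]])
        show "\<forall>a b c d. (a,b,c,d)\<in>R \<longrightarrow> fst (x,y) \<noteq> a \<and> fst (x,y) \<noteq> b \<and> snd (x,y) \<noteq> c \<and> snd (x,y) \<noteq> d"
          using nx y(2) unfolding XE_def YE_def by force
      qed
      ultimately show False by blast
    qed
  qed
  then show ?thesis using fin(1) finite_subset by blast
qed

lemma horiz_finite:
  assumes "RP P" shows "finite (horiz_coords P)"
proof -
  obtain R where R: "finite R" "\<forall>a b c d. (a,b,c,d)\<in>R \<longrightarrow> a<b \<and> c<d" "P = rset R"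
    using RP_D[OF assms] by blast
  define XE where "XE = (\<lambda>(a,b,c,d). a) ` R \<union> (\<lambda>(a,b,c,d). b) ` R"
  define YE where "YE = (\<lambda>(a,b,c,d). c) ` R \<union> (\<lambda>(a,b,c,d). d) ` R"
  have fin: "finite XE" "finite YE" unfolding XE_def YE_def using R(1) by auto
  have "horiz_coords P \<subseteq> YE"
  proof
    fix y assume "y \<in> horiz_coords P"
    then obtain a b where ab: "a < b" "{a..b} \<times> {y} \<subseteq> frontier P" unfolding horiz_coords_def by blast
    show "y \<in> YE"
    proof (rule ccontr)
      assume ny: "y \<notin> YE"
      have "\<not> {a..b} \<subseteq> XE" using ab(1) fin(1) infinite_Icc finite_subset by blast
      then obtain x where x: "x \<in> {a..b}" "x \<notin> XE" by blast
      have "(x,y) \<in> frontier P" using ab x by auto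
      moreover have "(x,y) \<notin> frontier P"
      proof (rule not_frontier_generic[OF R(1) R(3) RP_closed[OF assms]])
        show "\<forall>a b c d. (a,b,c,d)\<in>R \<longrightarrow> fst (x,y) \<noteq> a \<and> fst (x,y) \<noteq> b \<and> snd (x,y) \<noteq> c \<and> snd (x,y) \<noteq> d"
          using ny x(2) unfolding XE_def YE_def by force
      qed
      ultimately show False by blast
    qed
  qed
  then show ?thesis using fin(2) finite_subset by blast
qed



lemma frontier_from: "p \<in> P \<Longrightarrow> (\<And>e. e > 0 \<Longrightarrow> \<exists>p'. dist p p' < e \<and> p' \<notin> P) \<Longrightarrow> p \<in> frontier P"
  unfolding frontier_def using closure_subset mem_interior
  by (metis Diff_iff mem_ball subsetD)

lemma vert_max: assumes "RP P" shows "\<exists>B\<in>vert_coords P. \<forall>p\<in>P. fst p \<le> B"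
proof -
  obtain R where R: "finite R" "R \<noteq> {}" "\<forall>a b c d. (a,b,c,d)\<in>R \<longrightarrow> a<b \<and> c<d" "P = rset R"
    using RP_D[OF assms] by blast
  define Bs where "Bs = (\<lambda>(a,b,c,d). b) ` R"
  define B where "B = Max Bs"
  have fin: "finite Bs" "Bs \<noteq> {}" unfolding Bs_def using R by auto
  have bnd: "b' \<le> B" if "(a',b',c',d')\<in>R" for a' b' c' d'
    unfolding B_def using fin that by (intro Max_ge) (auto simp: Bs_def image_iff intro!: bexI[of _ "(a',b',c',d')"])
  have "B \<in> Bs" unfolding B_def using fin Max_in by blast
  then obtain a c d where acd: "(a,B,c,d)\<in>R" unfolding Bs_def by auto
  have lt: "a < B" "c < d" using R(3) acd by auto
  have inP: "\<forall>p\<in>P. fst p \<le> B"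
  proof
    fix p assume "p \<in> P"
    then obtain a' b' c' d' where h: "(a',b',c',d')\<in>R" "a' \<le> fst p" "fst p \<le> b'" "c' \<le> snd p" "snd p \<le> d'"
      unfolding R(4) rset_mem by blast
    show "fst p \<le> B" using bnd[OF h(1)] h by linarith
  qed
  have "{B} \<times> {c..d} \<subseteq> frontier P"
  proof
    fix p assume p: "p \<in> {B} \<times> {c..d}"
    show "p \<in> frontier P"
    proof (rule frontier_from)
      show "p \<in> P" unfolding R(4) rset_mem using p acd lt by (intro exI[of _ a] exI[of _ B] exI[of _ c] exI[of _ d]) auto
      fix e :: real assume e: "e > 0"
      show "\<exists>p'. dist p p' < e \<and> p' \<notin> P"
        using inP e p by (intro exI[of _ "(B + e/2, snd p)"]) (auto simp: dist_Pair_Pair dist_real_def)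
    qed
  qed
  then have "B \<in> vert_coords P" unfolding vert_coords_def using lt by blast
  then show ?thesis using inP by blast
qed

lemma vert_min: assumes "RP P" shows "\<exists>A\<in>vert_coords P. \<forall>p\<in>P. A \<le> fst p"
proof -
  obtain R where R: "finite R" "R \<noteq> {}" "\<forall>a b c d. (a,b,c,d)\<in>R \<longrightarrow> a<b \<and> c<d" "P = rset R"
    using RP_D[OF assms] by blast
  define Bs where "Bs = (\<lambda>(a,b,c,d). a) ` R"
  define B where "B = Min Bs"
  have fin: "finite Bs" "Bs \<noteq> {}" unfolding Bs_def using R by auto
  have bnd: "B \<le> a'" if "(a',b',c',d')\<in>R" for a' b' c' d'
    unfolding B_def using fin that by (intro Min_le) (auto simp: Bs_def image_iff intro!: bexI[of _ "(a',b',c',d')"])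
  have "B \<in> Bs" unfolding B_def using fin Min_in by blast
  then obtain b c d where acd: "(B,b,c,d)\<in>R" unfolding Bs_def by auto
  have lt: "B < b" "c < d" using R(3) acd by auto
  have inP: "\<forall>p\<in>P. B \<le> fst p"
  proof
    fix p assume "p \<in> P"
    then obtain a' b' c' d' where h: "(a',b',c',d')\<in>R" "a' \<le> fst p" "fst p \<le> b'" "c' \<le> snd p" "snd p \<le> d'"
      unfolding R(4) rset_mem by blast
    show "B \<le> fst p" using bnd[OF h(1)] h by linarith
  qed
  have "{B} \<times> {c..d} \<subseteq> frontier P"
  proof
    fix p assume p: "p \<in> {B} \<times> {c..d}"
    show "p \<in> frontier P"
    proof (rule frontier_from)
      show "p \<in> P" unfolding R(4) rset_mem using p acd lt by (intro exI[of _ B] exI[of _ b] exI[of _ c] exI[of _ d]) auto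
      fix e :: real assume e: "e > 0"
      show "\<exists>p'. dist p p' < e \<and> p' \<notin> P"
        using inP e p by (intro exI[of _ "(B - e/2, snd p)"]) (auto simp: dist_Pair_Pair dist_real_def)
    qed
  qed
  then have "B \<in> vert_coords P" unfolding vert_coords_def using lt by blast
  then show ?thesis using inP by blast
qed

lemma horiz_max: assumes "RP P" shows "\<exists>B\<in>horiz_coords P. \<forall>p\<in>P. snd p \<le> B"
proof -
  obtain R where R: "finite R" "R \<noteq> {}" "\<forall>a b c d. (a,b,c,d)\<in>R \<longrightarrow> a<b \<and> c<d" "P = rset R"
    using RP_D[OF assms] by blast
  define Bs where "Bs = (\<lambda>(a,b,c,d). d) ` R"
  define B where "B = Max Bs"
  have fin: "finite Bs" "Bs \<noteq> {}" unfolding Bs_def using R by auto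
  have bnd: "d' \<le> B" if "(a',b',c',d')\<in>R" for a' b' c' d'
    unfolding B_def using fin that by (intro Max_ge) (auto simp: Bs_def image_iff intro!: bexI[of _ "(a',b',c',d')"])
  have "B \<in> Bs" unfolding B_def using fin Max_in by blast
  then obtain a b c where acd: "(a,b,c,B)\<in>R" unfolding Bs_def by auto
  have lt: "a < b" "c < B" using R(3) acd by auto
  have inP: "\<forall>p\<in>P. snd p \<le> B"
  proof
    fix p assume "p \<in> P"
    then obtain a' b' c' d' where h: "(a',b',c',d')\<in>R" "a' \<le> fst p" "fst p \<le> b'" "c' \<le> snd p" "snd p \<le> d'"
      unfolding R(4) rset_mem by blast
    show "snd p \<le> B" using bnd[OF h(1)] h by linarith
  qed
  have "{a..b} \<times> {B} \<subseteq> frontier P"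
  proof
    fix p assume p: "p \<in> {a..b} \<times> {B}"
    show "p \<in> frontier P"
    proof (rule frontier_from)
      show "p \<in> P" unfolding R(4) rset_mem using p acd lt by (intro exI[of _ a] exI[of _ b] exI[of _ c] exI[of _ B]) auto
      fix e :: real assume e: "e > 0"
      show "\<exists>p'. dist p p' < e \<and> p' \<notin> P"
        using inP e p by (intro exI[of _ "(fst p, B + e/2)"]) (auto simp: dist_Pair_Pair dist_real_def)
    qed
  qed
  then have "B \<in> horiz_coords P" unfolding horiz_coords_def using lt by blast
  then show ?thesis using inP by blast
qed

lemma horiz_min: assumes "RP P" shows "\<exists>A\<in>horiz_coords P. \<forall>p\<in>P. A \<le> snd p"
proof -
  obtain R where R: "finite R" "R \<noteq> {}" "\<forall>a b c d. (a,b,c,d)\<in>R \<longrightarrow> a<b \<and> c<d" "P = rset R"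
    using RP_D[OF assms] by blast
  define Bs where "Bs = (\<lambda>(a,b,c,d). c) ` R"
  define B where "B = Min Bs"
  have fin: "finite Bs" "Bs \<noteq> {}" unfolding Bs_def using R by auto
  have bnd: "B \<le> c'" if "(a',b',c',d')\<in>R" for a' b' c' d'
    unfolding B_def using fin that by (intro Min_le) (auto simp: Bs_def image_iff intro!: bexI[of _ "(a',b',c',d')"])
  have "B \<in> Bs" unfolding B_def using fin Min_in by blast
  then obtain a b d where acd: "(a,b,B,d)\<in>R" unfolding Bs_def by auto
  have lt: "a < b" "B < d" using R(3) acd by auto
  have inP: "\<forall>p\<in>P. B \<le> snd p"
  proof
    fix p assume "p \<in> P"
    then obtain a' b' c' d' where h: "(a',b',c',d')\<in>R" "a' \<le> fst p" "fst p \<le> b'" "c' \<le> snd p" "snd p \<le> d'"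
      unfolding R(4) rset_mem by blast
    show "B \<le> snd p" using bnd[OF h(1)] h by linarith
  qed
  have "{a..b} \<times> {B} \<subseteq> frontier P"
  proof
    fix p assume p: "p \<in> {a..b} \<times> {B}"
    show "p \<in> frontier P"
    proof (rule frontier_from)
      show "p \<in> P" unfolding R(4) rset_mem using p acd lt by (intro exI[of _ a] exI[of _ b] exI[of _ B] exI[of _ d]) auto
      fix e :: real assume e: "e > 0"
      show "\<exists>p'. dist p p' < e \<and> p' \<notin> P"
        using inP e p by (intro exI[of _ "(fst p, B - e/2)"]) (auto simp: dist_Pair_Pair dist_real_def)
    qed
  qed
  then have "B \<in> horiz_coords P" unfolding horiz_coords_def using lt by blast
  then show ?thesis using inP by blast
qed

lemma max0_nonneg: "finite S \<Longrightarrow> \<forall>x\<in>S. 0 \<le> x \<Longrightarrow> 0 \<le> max0 S"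
  unfolding max0_def by (auto intro: order_trans[OF _ Max_ge])

lemma bound_plus:
  assumes "finite V" "B \<in> V" "z \<le> B" shows "z \<le> max0 {x \<in> V. x \<ge> 0}"
proof -
  define S where "S = {x \<in> V. x \<ge> 0}"
  have fin: "finite S" unfolding S_def using assms(1) by simp
  have "z \<le> max0 S"
  proof (cases "B \<ge> 0")
    case True
    then have BS: "B \<in> S" unfolding S_def using assms by simp
    then have "B \<le> Max S" using fin by (intro Max_ge)
    moreover have "max0 S = Max S" using BS unfolding max0_def by auto
    ultimately show ?thesis using assms by linarith
  next
    case False
    have "0 \<le> max0 S" using fin by (intro max0_nonneg) (auto simp: S_def)
    then show ?thesis using False assms by linarith
  qed
  then show ?thesis unfolding S_def .
qed

lemma bound_minus:
  assumes "finite V" "A \<in> V" "A \<le> z" shows "- max0 {- x | x. x \<in> V \<and> x < 0} \<le> z"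
proof -
  define S where "S = {- x | x. x \<in> V \<and> x < 0}"
  have fin: "finite S" unfolding S_def using assms(1) by (simp add: Setcompr_eq_image)
  have "- max0 S \<le> z"
  proof (cases "A < 0")
    case True
    have AS: "-A \<in> S" using True assms unfolding S_def by auto
    then have "-A \<le> Max S" using fin by (intro Max_ge)
    moreover have "max0 S = Max S" using AS unfolding max0_def by auto
    ultimately show ?thesis using assms by linarith
  next
    case False
    have "0 \<le> max0 S" using fin by (intro max0_nonneg) (auto simp: S_def)
    then show ?thesis using False assms by linarith
  qed
  then show ?thesis unfolding S_def .
qed



lemma step_up: "(a::int) \<in> {-1,1} \<Longrightarrow> (t::real) > 0 \<Longrightarrow> y = x + t * of_int a \<Longrightarrow> x \<le> y \<Longrightarrow> a = 1"
  by (cases "a = 1") auto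

lemma step_down: "(a::int) \<in> {-1,1} \<Longrightarrow> (t::real) > 0 \<Longrightarrow> y = x + t * of_int a \<Longrightarrow> y \<le> x \<Longrightarrow> a = -1"
  by (cases "a = 1") auto

lemma coef:
  fixes x t :: "nat \<Rightarrow> real" and a :: "nat \<Rightarrow> int" and V :: "real set"
  assumes k: "k \<ge> 1"
    and st: "\<forall>i<k. a i \<in> {-1,1} \<and> t i > 0 \<and> x (Suc i) = x i + t i * of_int (a i)"
    and fin: "finite V" and x0: "x 0 \<in> V" and xk: "x k \<in> V"
    and mid: "\<forall>i. 0<i \<and> i<k \<and> a i \<noteq> a (i-1) \<longrightarrow> x i \<in> V"
  shows "\<exists>n::real\<Rightarrow>int. (\<Sum>v\<in>({v\<in>V. v\<ge>0} \<union> {-v|v. v\<in>V \<and> v<0}) - {0}. of_int (n v) * v) = (\<Sum>i<k. t i)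
     \<and> (\<forall>R. (\<forall>i\<le>k. x i \<le> R) \<and> R>0 \<and> -R \<notin> V \<longrightarrow> n R \<ge> 0)
     \<and> (\<forall>L. (\<forall>i\<le>k. -L \<le> x i) \<and> L>0 \<and> L \<notin> V \<longrightarrow> n L \<ge> 0)"
proof -
  define e where "e i = (if 0<i then a(i-1) else 0) - (if i<k then a i else 0)" for i
  define n where "n v = (\<Sum>i\<le>k. (if x i = v then e i else 0) - (if x i = -v then e i else 0))" for v
  define W where "W = ({v\<in>V. v\<ge>0} \<union> {-v|v. v\<in>V \<and> v<0}) - {0}"
  have K1: "x i \<in> V" if ei: "e i \<noteq> 0" and ik: "i \<le> k" for i
  proof -
    consider "i = 0" | "i = k" | "0 < i \<and> i < k" using ik by linarith
    then show ?thesis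
    proof cases
      case 1 then show ?thesis using x0 by simp
    next
      case 2 then show ?thesis using xk by simp
    next
      case 3
      then have "a i \<noteq> a (i-1)" using ei unfolding e_def by auto
      then show ?thesis using mid 3 by blast
    qed
  qed
  obtain k' where kk: "k = Suc k'" using k by (cases k) auto
  have K2: "(\<Sum>i\<le>k. of_int (e i) * x i) = (\<Sum>i<k. t i)"
  proof -
    have "(\<Sum>i\<le>k. of_int (e i) * x i) = (\<Sum>i\<le>k. (if 0<i then of_int (a (i-1)) * x i else 0)) - (\<Sum>i\<le>k. (if i<k then of_int (a i) * x i else 0))"
      unfolding e_def sum_subtractf[symmetric] by (intro sum.cong) (auto simp: algebra_simps)
    also have "(\<Sum>i\<le>k. (if 0<i then of_int (a (i-1)) * x i else 0)) = (\<Sum>i<k. of_int (a i) * x (Suc i))"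
      unfolding kk sum.atMost_Suc_shift lessThan_Suc_atMost by simp
    also have "(\<Sum>i\<le>k. (if i<k then of_int (a i) * x i else 0)) = (\<Sum>i<k. of_int (a i) * x i)"
      unfolding kk sum.atMost_Suc lessThan_Suc_atMost by (auto intro!: sum.cong)
    also have "(\<Sum>i<k. of_int (a i) * x (Suc i)) - (\<Sum>i<k. of_int (a i) * x i) = (\<Sum>i<k. t i)"
      unfolding sum_subtractf[symmetric]
    proof (intro sum.cong refl)
      fix i assume "i \<in> {..<k}"
      then have h: "a i \<in> {-1,1}" "x (Suc i) = x i + t i * of_int (a i)" using st by auto
      have "of_int (a i) * (of_int (a i) :: real) = 1" using h(1) by auto
      then show "of_int (a i) * x (Suc i) - of_int (a i) * x i = t i"
        using h(2) by (simp add: algebra_simps)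
    qed
    finally show ?thesis .
  qed
  have W_pos: "v > 0" if "v \<in> W" for v using that unfolding W_def by auto
  have finW: "finite W" unfolding W_def using fin by (simp add: Setcompr_eq_image)
  have K3: "of_int (n v) * v = (\<Sum>i\<le>k. if \<bar>x i\<bar> = v then of_int (e i) * x i else 0)" if "v > 0" for v
    unfolding n_def of_int_sum sum_distrib_right
  proof (intro sum.cong refl)
    fix i
    show "of_int ((if x i = v then e i else 0) - (if x i = - v then e i else 0)) * v =
         (if \<bar>x i\<bar> = v then of_int (e i) * x i else 0)"
      using that by (cases "x i = v"; cases "x i = -v") (auto simp: abs_if)
  qed
  have "(\<Sum>v\<in>W. of_int (n v) * v) = (\<Sum>v\<in>W. \<Sum>i\<le>k. if \<bar>x i\<bar> = v then of_int (e i) * x i else 0)"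
    by (rule sum.cong) (auto simp: K3 W_pos)
  also have "\<dots> = (\<Sum>i\<le>k. \<Sum>v\<in>W. if \<bar>x i\<bar> = v then of_int (e i) * x i else 0)"
    by (rule sum.swap)
  also have "\<dots> = (\<Sum>i\<le>k. if \<bar>x i\<bar> \<in> W then of_int (e i) * x i else 0)"
    using finW by (simp add: sum.delta)
  also have "\<dots> = (\<Sum>i\<le>k. of_int (e i) * x i)"
  proof (intro sum.cong refl)
    fix i assume i: "i \<in> {..k}"
    show "(if \<bar>x i\<bar> \<in> W then of_int (e i) * x i else 0) = of_int (e i) * x i"
    proof (cases "e i = 0 \<or> x i = 0")
      case True then show ?thesis by auto
    next
      case False
      then have "x i \<in> V" using K1 i by auto
      then have "\<bar>x i\<bar> \<in> W" using False unfolding W_def by (auto simp: abs_if)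
      then show ?thesis by simp
    qed
  qed
  also have "\<dots> = (\<Sum>i<k. t i)" by (rule K2)
  finally have S: "(\<Sum>v\<in>W. of_int (n v) * v) = (\<Sum>i<k. t i)" .
  have SR: "n R \<ge> 0" if R: "\<forall>i\<le>k. x i \<le> R" "R > 0" "-R \<notin> V" for R
    unfolding n_def
  proof (intro sum_nonneg)
    fix i assume i: "i \<in> {..k}"
    have A1: "a (i-1) = 1" if "0 < i" "x i = R"
    proof -
      obtain j where j: "i = Suc j" using \<open>0 < i\<close> by (cases i) auto
      have h: "a (i-1) \<in> {-1,1}" "t (i-1) > 0" "x i = x (i-1) + t (i-1) * of_int (a (i-1))"
        using st i j by auto
      have "x (i-1) \<le> x i" using R(1) i that by auto
      then show ?thesis using step_up[OF h(1) h(2) h(3)] by blast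
    qed
    have A2: "a i = -1" if "i < k" "x i = R"
    proof -
      have h: "a i \<in> {-1,1}" "t i > 0" "x (Suc i) = x i + t i * of_int (a i)"
        using st that(1) by auto
      have "x (Suc i) \<le> x i" using R(1) that by auto
      then show ?thesis using step_down[OF h(1) h(2) h(3)] by blast
    qed
    have "e i = 0" if "x i = -R" using K1[of i] i R(3) that by auto
    moreover have "e i \<ge> 0" if "x i = R" using A1 A2 that unfolding e_def by auto
    ultimately show "0 \<le> (if x i = R then e i else 0) - (if x i = - R then e i else 0)"
      using R(2) by auto
  qed
  have SL: "n L \<ge> 0" if L: "\<forall>i\<le>k. -L \<le> x i" "L > 0" "L \<notin> V" for L
    unfolding n_def
  proof (intro sum_nonneg)
    fix i assume i: "i \<in> {..k}"
    have A1: "a (i-1) = -1" if "0 < i" "x i = -L"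
    proof -
      obtain j where j: "i = Suc j" using \<open>0 < i\<close> by (cases i) auto
      have h: "a (i-1) \<in> {-1,1}" "t (i-1) > 0" "x i = x (i-1) + t (i-1) * of_int (a (i-1))"
        using st i j by auto
      have "x i \<le> x (i-1)" using L(1) i that by auto
      then show ?thesis using step_down[OF h(1) h(2) h(3)] by blast
    qed
    have A2: "a i = 1" if "i < k" "x i = -L"
    proof -
      have h: "a i \<in> {-1,1}" "t i > 0" "x (Suc i) = x i + t i * of_int (a i)"
        using st that(1) by auto
      have "x i \<le> x (Suc i)" using L(1) that by auto
      then show ?thesis using step_up[OF h(1) h(2) h(3)] by blast
    qed
    have "e i = 0" if "x i = L" using K1[of i] i L(3) that by auto
    moreover have "e i \<le> 0" if "x i = -L" using A1 A2 that unfolding e_def by auto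
    ultimately show "0 \<le> (if x i = L then e i else 0) - (if x i = - L then e i else 0)"
      using L(2) by auto
  qed
  have S': "(\<Sum>v\<in>({v\<in>V. v\<ge>0} \<union> {-v|v. v\<in>V \<and> v<0}) - {0}. of_int (n v) * v) = (\<Sum>i<k. t i)"
    using S unfolding W_def .
  show ?thesis
    apply (rule exI[of _ n])
    apply (intro conjI allI impI)
      apply (rule S')
     apply (rule SR; blast)
    apply (rule SL; blast)
    done
qed



theorem theorem4p1:
  fixes P :: "(real \<times> real) set"
  assumes "RP P"
    and "xP_plus P \<notin> XP_minus P" and "xP_minus P \<notin> XP_plus P"
    and "yP_plus P \<notin> YP_minus P" and "yP_minus P \<notin> YP_plus P"
    and "\<forall>(n :: real \<Rightarrow> int) (m :: real \<Rightarrow> int).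
           ((\<exists>x\<in>XP P - {0}. n x \<noteq> 0) \<or> (\<exists>y\<in>YP P - {0}. m y \<noteq> 0)) \<and>
           (xP_plus P \<noteq> 0 \<and> xP_minus P \<noteq> 0 \<longrightarrow> n (xP_plus P) * n (xP_minus P) \<ge> 0) \<and>
           (yP_plus P \<noteq> 0 \<and> yP_minus P \<noteq> 0 \<longrightarrow> m (yP_plus P) * m (yP_minus P) \<ge> 0)
           \<longrightarrow> (\<Sum>x\<in>XP P - {0}. of_int (n x) * x) - (\<Sum>y\<in>YP P - {0}. of_int (m y) * y) \<noteq> 0"
  shows "\<not> resonant P"
proof
  assume "resonant P"
  then obtain k q d where k: "k \<ge> 1" and c0: "corner P (q 0)" and ck: "corner P (q k)"
    and legs: "\<forall>i<k. fst (d i) \<in> {-1, 1} \<and> snd (d i) \<in> {-1, 1} \<and>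
            (\<exists>t>0. q (Suc i) = q i + t *\<^sub>R d i) \<and>
            closed_segment (q i) (q (Suc i)) \<subseteq> P \<and>
            open_segment (q i) (q (Suc i)) \<subseteq> interior P"
    and refl: "\<forall>i. 0 < i \<and> i < k \<longrightarrow>
            q i \<in> frontier P \<and> \<not> corner P (q i) \<and>
            (on_vside P (q i) \<longrightarrow> d i = (- fst (d (i - 1)), snd (d (i - 1)))) \<and>
            (on_hside P (q i) \<longrightarrow> d i = (fst (d (i - 1)), - snd (d (i - 1))))"
    unfolding resonant_def by blast
  have RP: "RP P" by (rule assms(1))
  have "\<forall>i. \<exists>t. i < k \<longrightarrow> t > 0 \<and> q (Suc i) = q i + t *\<^sub>R d i" using legs by blast
  then obtain t where t: "\<And>i. i < k \<Longrightarrow> t i > 0 \<and> q (Suc i) = q i + t i *\<^sub>R d i" by metis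
  define a where "a i = (if fst (d i) = 1 then 1 else -1 :: int)" for i
  define b where "b i = (if snd (d i) = 1 then 1 else -1 :: int)" for i
  have ad: "of_int (a i) = fst (d i)" "of_int (b i) = snd (d i)" if "i < k" for i
    using legs that unfolding a_def b_def by auto
  have qP: "q i \<in> P" if "i \<le> k" for i
  proof (cases "i < k")
    case True then show ?thesis using legs by auto
  next
    case False
    then have "i = Suc (k - 1)" using that k by auto
    moreover have "closed_segment (q (k-1)) (q (Suc (k-1))) \<subseteq> P"
    proof -
      have "k - 1 < k" using k by simp
      then show ?thesis using legs by blast
    qed
    then have "q (Suc (k-1)) \<in> P" using ends_in_segment(2) by blast
    ultimately show ?thesis by simp
  qed
  define T where "T = (\<Sum>i<k. t i)"
  have Tpos: "T > 0" unfolding T_def using t k by (intro sum_pos) (auto simp: lessThan_empty_iff)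
  have fV: "finite (vert_coords P)" "finite (horiz_coords P)" using vert_finite horiz_finite RP by auto
  have midx: "\<forall>i. 0<i \<and> i<k \<and> a i \<noteq> a (i-1) \<longrightarrow> fst (q i) \<in> vert_coords P"
  proof (intro allI impI)
    fix i assume i: "0<i \<and> i<k \<and> a i \<noteq> a (i-1)"
    have "fst (d i) \<noteq> fst (d (i-1))" using i unfolding a_def by auto
    moreover have "on_vside P (q i) \<or> on_hside P (q i)" using trich[OF RP] refl i by blast
    ultimately have "on_vside P (q i)" using refl i by auto
    then show "fst (q i) \<in> vert_coords P" by (rule vside_coord)
  qed
  have midy: "\<forall>i. 0<i \<and> i<k \<and> b i \<noteq> b (i-1) \<longrightarrow> snd (q i) \<in> horiz_coords P"
  proof (intro allI impI)
    fix i assume i: "0<i \<and> i<k \<and> b i \<noteq> b (i-1)"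
    have "snd (d i) \<noteq> snd (d (i-1))" using i unfolding b_def by auto
    moreover have "on_vside P (q i) \<or> on_hside P (q i)" using trich[OF RP] refl i by blast
    ultimately have "on_hside P (q i)" using refl i by auto
    then show "snd (q i) \<in> horiz_coords P" by (rule hside_coord)
  qed
  have stx: "\<forall>i<k. a i \<in> {-1,1} \<and> t i > 0 \<and> fst (q (Suc i)) = fst (q i) + t i * of_int (a i)"
    using t ad unfolding a_def by auto
  have sty: "\<forall>i<k. b i \<in> {-1,1} \<and> t i > 0 \<and> snd (q (Suc i)) = snd (q i) + t i * of_int (b i)"
    using t ad unfolding b_def by auto
  from coef[OF k stx fV(1) corner_coords(1)[OF c0] corner_coords(1)[OF ck] midx]
  obtain n where n0: "(\<Sum>v\<in>({v\<in>vert_coords P. v\<ge>0} \<union> {-v|v. v\<in>vert_coords P \<and> v<0}) - {0}. of_int (n v) * v) = (\<Sum>i<k. t i)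
     \<and> (\<forall>R. (\<forall>i\<le>k. fst (q i) \<le> R) \<and> R>0 \<and> -R \<notin> vert_coords P \<longrightarrow> n R \<ge> 0)
     \<and> (\<forall>L. (\<forall>i\<le>k. -L \<le> fst (q i)) \<and> L>0 \<and> L \<notin> vert_coords P \<longrightarrow> n L \<ge> 0)" ..
  from coef[OF k sty fV(2) corner_coords(2)[OF c0] corner_coords(2)[OF ck] midy]
  obtain m where m0: "(\<Sum>v\<in>({v\<in>horiz_coords P. v\<ge>0} \<union> {-v|v. v\<in>horiz_coords P \<and> v<0}) - {0}. of_int (m v) * v) = (\<Sum>i<k. t i)
     \<and> (\<forall>R. (\<forall>i\<le>k. snd (q i) \<le> R) \<and> R>0 \<and> -R \<notin> horiz_coords P \<longrightarrow> m R \<ge> 0)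
     \<and> (\<forall>L. (\<forall>i\<le>k. -L \<le> snd (q i)) \<and> L>0 \<and> L \<notin> horiz_coords P \<longrightarrow> m L \<ge> 0)" ..
  have n: "(\<Sum>v\<in>({v\<in>vert_coords P. v\<ge>0} \<union> {-v|v. v\<in>vert_coords P \<and> v<0}) - {0}. of_int (n v) * v) = T"
     "\<And>R. (\<forall>i\<le>k. fst (q i) \<le> R) \<Longrightarrow> R>0 \<Longrightarrow> -R \<notin> vert_coords P \<Longrightarrow> n R \<ge> 0"
     "\<And>L. (\<forall>i\<le>k. -L \<le> fst (q i)) \<Longrightarrow> L>0 \<Longrightarrow> L \<notin> vert_coords P \<Longrightarrow> n L \<ge> 0"
    using n0 unfolding T_def by simp_all
  have m: "(\<Sum>v\<in>({v\<in>horiz_coords P. v\<ge>0} \<union> {-v|v. v\<in>horiz_coords P \<and> v<0}) - {0}. of_int (m v) * v) = T"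
     "\<And>R. (\<forall>i\<le>k. snd (q i) \<le> R) \<Longrightarrow> R>0 \<Longrightarrow> -R \<notin> horiz_coords P \<Longrightarrow> m R \<ge> 0"
     "\<And>L. (\<forall>i\<le>k. -L \<le> snd (q i)) \<Longrightarrow> L>0 \<Longrightarrow> L \<notin> horiz_coords P \<Longrightarrow> m L \<ge> 0"
    using m0 unfolding T_def by simp_all
  have XPe: "XP P = {v\<in>vert_coords P. v\<ge>0} \<union> {-v|v. v\<in>vert_coords P \<and> v<0}"
    unfolding XP_def XP_plus_def XP_minus_def by simp
  have YPe: "YP P = {v\<in>horiz_coords P. v\<ge>0} \<union> {-v|v. v\<in>horiz_coords P \<and> v<0}"
    unfolding YP_def YP_plus_def YP_minus_def by simp
  have sx: "(\<Sum>x\<in>XP P - {0}. of_int (n x) * x) = T" using n(1) XPe by simp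
  have sy: "(\<Sum>y\<in>YP P - {0}. of_int (m y) * y) = T" using m(1) YPe by simp
  have nz: "\<exists>x\<in>XP P - {0}. n x \<noteq> 0"
  proof (rule ccontr)
    assume "\<not> ?thesis"
    then have "(\<Sum>x\<in>XP P - {0}. of_int (n x) * x) = 0" by (intro sum.neutral) auto
    then show False using sx Tpos by simp
  qed
  have finXp: "finite (XP_plus P)" "finite (XP_minus P)" "finite (YP_plus P)" "finite (YP_minus P)"
    using fV unfolding XP_plus_def XP_minus_def YP_plus_def YP_minus_def by (auto simp: Setcompr_eq_image)
  have xpn: "xP_plus P \<ge> 0" "xP_minus P \<ge> 0" "yP_plus P \<ge> 0" "yP_minus P \<ge> 0"
    unfolding xP_plus_def xP_minus_def yP_plus_def yP_minus_def using finXp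
    by (auto intro!: max0_nonneg simp: XP_plus_def XP_minus_def YP_plus_def YP_minus_def)
  obtain B1 where B1: "B1 \<in> vert_coords P" "\<forall>p\<in>P. fst p \<le> B1" using vert_max[OF RP] by blast
  obtain A1 where A1: "A1 \<in> vert_coords P" "\<forall>p\<in>P. A1 \<le> fst p" using vert_min[OF RP] by blast
  obtain B2 where B2: "B2 \<in> horiz_coords P" "\<forall>p\<in>P. snd p \<le> B2" using horiz_max[OF RP] by blast
  obtain A2 where A2: "A2 \<in> horiz_coords P" "\<forall>p\<in>P. A2 \<le> snd p" using horiz_min[OF RP] by blast
  have bx1: "\<forall>i\<le>k. fst (q i) \<le> xP_plus P"
    unfolding xP_plus_def XP_plus_def using bound_plus[OF fV(1) B1(1)] B1(2) qP by blast
  have bx2: "\<forall>i\<le>k. - xP_minus P \<le> fst (q i)"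
    unfolding xP_minus_def XP_minus_def using bound_minus[OF fV(1) A1(1)] A1(2) qP by blast
  have by1: "\<forall>i\<le>k. snd (q i) \<le> yP_plus P"
    unfolding yP_plus_def YP_plus_def using bound_plus[OF fV(2) B2(1)] B2(2) qP by blast
  have by2: "\<forall>i\<le>k. - yP_minus P \<le> snd (q i)"
    unfolding yP_minus_def YP_minus_def using bound_minus[OF fV(2) A2(1)] A2(2) qP by blast
  have signx: "n (xP_plus P) * n (xP_minus P) \<ge> 0" if "xP_plus P \<noteq> 0 \<and> xP_minus P \<noteq> 0"
  proof -
    have "- xP_plus P \<notin> vert_coords P"
    proof
      assume h: "- xP_plus P \<in> vert_coords P"
      have "xP_plus P \<in> XP_minus P" unfolding XP_minus_def
        using h that xpn by (intro CollectI exI[of _ "- xP_plus P"]) auto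
      then show False using assms(2) by blast
    qed
    then have 1: "n (xP_plus P) \<ge> 0" using n(2)[OF bx1] that xpn by auto
    have "xP_minus P \<notin> vert_coords P"
    proof
      assume h: "xP_minus P \<in> vert_coords P"
      have "xP_minus P \<in> XP_plus P" unfolding XP_plus_def using h xpn by auto
      then show False using assms(3) by blast
    qed
    then have 2: "n (xP_minus P) \<ge> 0" using n(3)[OF bx2] that xpn by auto
    show ?thesis using 1 2 by simp
  qed
  have signy: "m (yP_plus P) * m (yP_minus P) \<ge> 0" if "yP_plus P \<noteq> 0 \<and> yP_minus P \<noteq> 0"
  proof -
    have "- yP_plus P \<notin> horiz_coords P"
    proof
      assume h: "- yP_plus P \<in> horiz_coords P"
      have "yP_plus P \<in> YP_minus P" unfolding YP_minus_def
        using h that xpn by (intro CollectI exI[of _ "- yP_plus P"]) auto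
      then show False using assms(4) by blast
    qed
    then have 1: "m (yP_plus P) \<ge> 0" using m(2)[OF by1] that xpn by auto
    have "yP_minus P \<notin> horiz_coords P"
    proof
      assume h: "yP_minus P \<in> horiz_coords P"
      have "yP_minus P \<in> YP_plus P" unfolding YP_plus_def using h xpn by auto
      then show False using assms(5) by blast
    qed
    then have 2: "m (yP_minus P) \<ge> 0" using m(3)[OF by2] that xpn by auto
    show ?thesis using 1 2 by simp
  qed
  have "(\<Sum>x\<in>XP P - {0}. of_int (n x) * x) - (\<Sum>y\<in>YP P - {0}. of_int (m y) * y) \<noteq> 0"
    using assms(6) nz signx signy by blast
  then show False using sx sy by simp
qed

end
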